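(* Let $p$ be prime, let $c_1,\dots,c_k$ be positive integers, and let $v\ge2$ be an integer coprime to $p$. There exist a collection of $v$-adic intervals $\{I_\ell\}_{\ell\ge1}$ in $[0,1)$ and positive integers $\alpha_\ell$ such that: (1) for each $i\in\{1,\dots,k\}$, letting $J^i_\ell$ be the smallest $pc_i$-adic interval containing $I_\ell$, the intervals $\{J^i_\ell\}_{\ell\ge1}$ are pairwise disjoint and contained in $[0,1)$; in particular the $I_\ell$ are pairwise disjoint; (2) for each $\alpha\in\mathbb{N}$ there are only finitely many $\ell$ with $\alpha_\ell=\alpha$; (3) for each $\ell\ge1$ and each $i$, there is a point $\zeta(J^i_\ell)$ which is an interior endpoint of some $pc_i$-adic child of $J^i_\ell$ such that $$0<\zeta(J^i_\ell)-Z(I_\ell)\le v^{-100\alpha_\ell}|I_\ell|.$$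
   Context: For a positive integer $N$, the $N$-adic intervals are $[\frac{k-1}{N^s},\frac{k}{N^s})$, $s,k\in\mathbb{Z}$, with $N$-adic children the $N$ equal-length subintervals $[\frac{k-1}{N^s}+\frac{j-1}{N^{s+1}},\frac{k-1}{N^s}+\frac{j}{N^{s+1}})$, $1\le j\le N$. For a $v$-adic interval $I=[\frac{k-1}{v^s},\frac{k}{v^s})$, $Z(I)=\frac{k-1}{v^s}+\frac{v-1}{v^{s+1}}$ is the left endpoint of its last $v$-adic child. An interior endpoint of a child of $J$ is an endpoint of that child lying in the interior of $J$. $|I|$ is the length of $I$. *)

theory Defs
  imports "HOL-Analysis.Analysis"
begin

definition adic_interval :: "nat \<Rightarrow> int \<Rightarrow> int \<Rightarrow> real set" where
  "adic_interval N s k = {real_of_int (k - 1) / real N powi s ..< real_of_int k / real N powi s}"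

definition is_adic :: "nat \<Rightarrow> real set \<Rightarrow> bool" where
  "is_adic N I \<longleftrightarrow> (\<exists>s k. I = adic_interval N s k)"

definition smallest_adic :: "nat \<Rightarrow> real set \<Rightarrow> real set" where
  "smallest_adic N I = (THE J. is_adic N J \<and> I \<subseteq> J \<and>
       (\<forall>J'. is_adic N J' \<and> I \<subseteq> J' \<longrightarrow> J \<subseteq> J'))"

definition adic_children :: "nat \<Rightarrow> real set \<Rightarrow> real set set" where
  "adic_children N J = {C. \<exists>s k (j::int). J = adic_interval N s k \<and> 1 \<le> j \<and> j \<le> int N \<and>
      C = {real_of_int (k - 1) / real N powi s + real_of_int (j - 1) / real N powi (s + 1)
           ..< real_of_int (k - 1) / real N powi s + real_of_int j / real N powi (s + 1)}}"

definition interior_child_endpoint :: "nat \<Rightarrow> real set \<Rightarrow> real \<Rightarrow> bool" where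
  "interior_child_endpoint N J z \<longleftrightarrow>
     (\<exists>C \<in> adic_children N J. (z = Inf C \<or> z = Sup C) \<and> z \<in> interior J)"

text \<open>Z(I): left endpoint of the last v-adic child of the v-adic interval I.\<close>
definition Zpt :: "nat \<Rightarrow> real set \<Rightarrow> real" where
  "Zpt v I = (THE z. \<exists>s k. I = adic_interval v s k \<and>
       z = real_of_int (k - 1) / real v powi s + (real v - 1) / real v powi (s + 1))"

definition ilen :: "real set \<Rightarrow> real" where
  "ilen I = Sup I - Inf I"

end

theory Submission
  imports Defs "HOL-Number_Theory.Number_Theory"
begin

lemma powi_pos: "N > 0 \<Longrightarrow> real N powi s > 0"
  by simp

lemma mem_adic:
  assumes "N > 0"
  shows "z \<in> adic_interval N s k \<longleftrightarrow>
    real_of_int (k-1) \<le> z * real N powi s \<and> z * real N powi s < real_of_int k"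
  using powi_pos[OF assms, of s]
  unfolding adic_interval_def by (auto simp: pos_divide_le_eq pos_less_divide_eq)

lemma powi_diff:
  assumes "N > 0" "s1 \<le> s2"
  shows "real N powi s2 = real N powi s1 * real N ^ nat (s2 - s1)"
proof -
  obtain n where n: "s2 - s1 = int n" using assms(2) by (metis zero_le_imp_eq_int diff_ge_0_iff_ge)
  have "real N powi s2 = real N powi (s1 + (s2 - s1))" by simp
  also have "\<dots> = real N powi s1 * real N powi (s2 - s1)"
    by (rule power_int_add) (use assms in simp)
  finally show ?thesis using n by (simp add: power_int_of_nat)
qed

lemma nest:
  assumes N: "N > 0" and x1: "x \<in> adic_interval N s1 k1" and x2: "x \<in> adic_interval N s2 k2"
    and le: "s1 \<le> s2"
  shows "adic_interval N s2 k2 \<subseteq> adic_interval N s1 k1"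
proof
  fix z assume z: "z \<in> adic_interval N s2 k2"
  define A :: int where "A = int N ^ nat (s2 - s1)"
  have A: "real N powi s2 = real N powi s1 * real_of_int A"
    unfolding A_def using powi_diff[OF N le] by simp
  have Apos: "A > 0" unfolding A_def using N by simp
  have P1: "real N powi s1 > 0" using powi_pos[OF N] by simp
  from x1 have a1: "real_of_int (k1-1) \<le> x * real N powi s1" "x * real N powi s1 < real_of_int k1"
    using mem_adic[OF N] by auto
  from x2 have a2: "real_of_int (k2-1) \<le> x * real N powi s1 * A" "x * real N powi s1 * A < real_of_int k2"
    using mem_adic[OF N] A by (auto simp: mult.assoc)
  have "real_of_int ((k1-1)*A) \<le> x * real N powi s1 * A"
    using a1 Apos by (simp add: mult_right_mono)
  hence i1: "(k1-1)*A \<le> k2 - 1" using a2 by linarith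
  have "x * real N powi s1 * A < real_of_int k1 * A"
    by (rule mult_strict_right_mono) (use a1 Apos in auto)
  hence "real_of_int (k2-1) < real_of_int (k1*A)" using a2 by simp
  hence i2: "k2 \<le> k1*A" by linarith
  from z have z2: "real_of_int (k2-1) \<le> z * real N powi s1 * A" "z * real N powi s1 * A < real_of_int k2"
    using mem_adic[OF N] A by (auto simp: mult.assoc)
  have "real_of_int ((k1-1)*A) \<le> real_of_int (k2-1)" using i1 by (simp only: of_int_le_iff)
  hence "real_of_int ((k1-1)*A) \<le> z * real N powi s1 * A" using z2(1) by linarith
  hence "real_of_int (k1-1) \<le> z * real N powi s1" using Apos by (simp add: mult_le_cancel_right)
  moreover have "real_of_int k2 \<le> real_of_int (k1 * A)" using i2 by (simp only: of_int_le_iff)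
  hence "z * real N powi s1 * A < real_of_int (k1 * A)" using z2(2) by linarith
  hence "z * real N powi s1 < real_of_int k1" using Apos by (simp add: mult_less_cancel_right)
  ultimately show "z \<in> adic_interval N s1 k1" using mem_adic[OF N] by auto
qed


lemma adic_Inf_Sup:
  assumes "N > 0"
  shows "Inf (adic_interval N s k) = real_of_int (k-1) / real N powi s"
    and "Sup (adic_interval N s k) = real_of_int k / real N powi s"
proof -
  have P: "real N powi s > 0" using assms by simp
  have lt: "real_of_int (k-1) / real N powi s < real_of_int k / real N powi s"
    using P by (simp add: divide_strict_right_mono)
  show "Inf (adic_interval N s k) = real_of_int (k-1) / real N powi s"
    unfolding adic_interval_def using lt by simp
  show "Sup (adic_interval N s k) = real_of_int k / real N powi s"
    unfolding adic_interval_def using lt by simp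
qed

lemma ilen_adic: "N > 0 \<Longrightarrow> ilen (adic_interval N s k) = 1 / real N powi s"
  unfolding ilen_def using adic_Inf_Sup[of N s k] by (simp add: diff_divide_distrib[symmetric])

lemma Zpt_adic:
  assumes "v > 0"
  shows "Zpt v (adic_interval v s k) = real_of_int (k - 1) / real v powi s + (real v - 1) / real v powi (s + 1)"
proof -
  let ?I = "adic_interval v s k"
  have gen: "real_of_int (k' - 1) / real v powi s' + (real v - 1) / real v powi (s' + 1)
        = Sup (adic_interval v s' k') - (Sup (adic_interval v s' k') - Inf (adic_interval v s' k')) / real v"
    for s' k'
  proof -
    have P: "real v powi s' > 0" using assms by simp
    have e: "real v powi (s' + 1) = real v powi s' * real v"
      by (rule power_int_add_1) (use assms in simp)
    show ?thesis unfolding adic_Inf_Sup[OF assms] e using P assms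
      by (simp add: field_simps)
  qed
  show ?thesis unfolding Zpt_def
  proof (rule the_equality)
    show "\<exists>s' k'. ?I = adic_interval v s' k' \<and>
      real_of_int (k - 1) / real v powi s + (real v - 1) / real v powi (s + 1) =
      real_of_int (k' - 1) / real v powi s' + (real v - 1) / real v powi (s' + 1)" by blast
  next
    fix z assume "\<exists>s' k'. ?I = adic_interval v s' k' \<and>
      z = real_of_int (k' - 1) / real v powi s' + (real v - 1) / real v powi (s' + 1)"
    then obtain s' k' where h: "?I = adic_interval v s' k'"
      "z = real_of_int (k' - 1) / real v powi s' + (real v - 1) / real v powi (s' + 1)" by blast
    show "z = real_of_int (k - 1) / real v powi s + (real v - 1) / real v powi (s + 1)"
      using h gen[where s'=s' and k'=k'] gen[where s'=s and k'=k] by simp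
  qed
qed

lemma smallest_eq:
  assumes "is_adic N J" "I \<subseteq> J" "\<forall>J'. is_adic N J' \<and> I \<subseteq> J' \<longrightarrow> J \<subseteq> J'"
  shows "smallest_adic N I = J"
  unfolding smallest_adic_def
  by (rule the_equality) (use assms in blast)+

lemma keyA:
  fixes N r :: nat and x y q :: real
  assumes N2: "N \<ge> 2" and x0: "0 \<le> x" and xq: "x < q" and qy: "q < y" and y1: "y \<le> 1"
    and qint: "q * real N ^ r \<in> \<int>" and small: "(y - x) * real N ^ r < 1"
  shows "{x..<y} \<subseteq> smallest_adic N {x..<y} \<and>
     (\<forall>J'. is_adic N J' \<and> {x..<y} \<subseteq> J' \<longrightarrow> smallest_adic N {x..<y} \<subseteq> J') \<and>
     interior_child_endpoint N (smallest_adic N {x..<y}) q"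
proof -
  have N: "N > 0" using N2 by simp
  have Npos: "real N ^ t > 0" for t using N by simp
  define Kf where "Kf t = adic_interval N (int t) (\<lfloor>x * real N ^ t\<rfloor> + 1)" for t
  have memK: "z \<in> Kf t \<longleftrightarrow> real_of_int \<lfloor>x * real N ^ t\<rfloor> \<le> z * real N ^ t \<and>
       z * real N ^ t < real_of_int \<lfloor>x * real N ^ t\<rfloor> + 1" for z t
    unfolding Kf_def using mem_adic[OF N] by (simp add: power_int_of_nat)
  have xK: "x \<in> Kf t" for t
    unfolding memK using of_int_floor_le real_of_int_floor_add_one_gt by blast
  define T where "T = {t. {x..<y} \<subseteq> Kf t}"
  have fl0: "\<lfloor>x\<rfloor> = 0" using x0 xq qy y1 by (simp add: floor_eq_iff)
  have "0 \<in> T" unfolding T_def using fl0 x0 y1 by (auto simp: memK)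
  have Tb: "t < r" if "t \<in> T" for t
  proof (rule ccontr)
    assume "\<not> t < r"
    hence tr: "r \<le> t" by simp
    have "q \<in> Kf t" using that xq qy unfolding T_def by auto
    hence q1: "q * real N ^ t < real_of_int \<lfloor>x * real N ^ t\<rfloor> + 1" by (simp add: memK)
    have "x * real N ^ t < q * real N ^ t" using xq Npos[of t] by simp
    hence q2: "real_of_int \<lfloor>x * real N ^ t\<rfloor> < q * real N ^ t"
      using of_int_floor_le[of "x * real N ^ t"] by linarith
    have "q * real N ^ t = (q * real N ^ r) * real N ^ (t - r)"
      using tr by (simp add: power_add[symmetric])
    moreover have "(q * real N ^ r) * real N ^ (t - r) \<in> \<int>"
      by (rule Ints_mult) (use qint in auto)
    ultimately have "q * real N ^ t \<in> \<int>" by metis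
    then obtain n where n: "q * real N ^ t = of_int n" by (auto elim: Ints_cases)
    from q1 q2 n have "real_of_int \<lfloor>x * real N ^ t\<rfloor> < real_of_int n"
      "real_of_int n < real_of_int (\<lfloor>x * real N ^ t\<rfloor> + 1)" by auto
    hence "\<lfloor>x * real N ^ t\<rfloor> < n" "n < \<lfloor>x * real N ^ t\<rfloor> + 1"
      by (simp_all only: of_int_less_iff)
    thus False by linarith
  qed
  have finT: "finite T" by (rule finite_subset[of _ "{..<r}"]) (use Tb in auto)
  define t0 where "t0 = Max T"
  have t0T: "t0 \<in> T" unfolding t0_def using finT \<open>0 \<in> T\<close> by (intro Max_in) auto
  have sucT: "Suc t0 \<notin> T"
  proof
    assume "Suc t0 \<in> T"
    hence "Suc t0 \<le> t0" unfolding t0_def using finT by (intro Max_ge) auto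
    thus False by simp
  qed
  define J where "J = Kf t0"
  have IJ: "{x..<y} \<subseteq> J" using t0T unfolding T_def J_def by simp
  have adJ: "is_adic N J" unfolding J_def Kf_def is_adic_def by blast
  have minJ: "\<forall>J'. is_adic N J' \<and> {x..<y} \<subseteq> J' \<longrightarrow> J \<subseteq> J'"
  proof (intro allI impI)
    fix J' assume a: "is_adic N J' \<and> {x..<y} \<subseteq> J'"
    then obtain s' k' where J': "J' = adic_interval N s' k'" unfolding is_adic_def by blast
    have xJ': "x \<in> J'" using a xq qy by auto
    show "J \<subseteq> J'"
    proof (cases "s' \<le> int t0")
      case True
      show ?thesis unfolding J_def Kf_def J'
        by (rule nest[OF N]) (use xJ' J' xK[of t0] True Kf_def in auto)
    next
      case False
      have "J' \<subseteq> Kf (Suc t0)" unfolding Kf_def J'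
        by (rule nest[OF N]) (use xJ' J' xK[of "Suc t0"] False Kf_def in auto)
      hence "Suc t0 \<in> T" using a unfolding T_def by blast
      with sucT show ?thesis by simp
    qed
  qed
  have smJ: "smallest_adic N {x..<y} = J" by (rule smallest_eq[OF adJ IJ minJ])
  define t1 where "t1 = Suc t0"
  define u0 where "u0 = \<lfloor>x * real N ^ t0\<rfloor>"
  define u1 where "u1 = \<lfloor>x * real N ^ t1\<rfloor>"
  define P0 where "P0 = real N ^ t0"
  have P0: "P0 > 0" unfolding P0_def using Npos by simp
  have P1: "real N ^ t1 = P0 * real N" unfolding t1_def P0_def by simp
  have x0b: "real_of_int u0 \<le> x * P0" "x * P0 < real_of_int u0 + 1"
    using xK[of t0] unfolding memK u0_def P0_def by auto
  have x1b: "real_of_int u1 \<le> x * P0 * real N" "x * P0 * real N < real_of_int u1 + 1"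
    using xK[of t1] unfolding memK u1_def P1 by (auto simp: mult.assoc)
  have "real_of_int (int N * u0) \<le> x * P0 * real N"
    using x0b(1) N by (simp add: mult.commute mult_right_mono)
  hence j1: "int N * u0 \<le> u1" unfolding u1_def P1 by (simp add: le_floor_iff mult.assoc)
  have "x * P0 * real N < real_of_int (int N * (u0 + 1))"
    using x0b(2) N by (simp add: mult.commute mult_strict_right_mono)
  hence j2: "u1 < int N * (u0 + 1)" unfolding u1_def P1 by (simp add: floor_less_iff mult.assoc)
  define j where "j = u1 - int N * u0 + 1"
  define e where "e = real_of_int (u1 + 1) / (P0 * real N)"
  define C where "C = {real_of_int u1 / (P0 * real N) ..< e}"
  have ppow0: "real N powi (int t0) = P0" unfolding P0_def by (simp add: power_int_of_nat)
  have ppow1: "real N powi (int t0 + 1) = P0 * real N"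
    using power_int_add_1[of "real N" "int t0"] ppow0 N by simp
  have Jeq: "J = adic_interval N (int t0) (u0 + 1)" unfolding J_def Kf_def u0_def by simp
  have Ceq: "C = {real_of_int (u0 + 1 - 1) / real N powi int t0 + real_of_int (j - 1) / real N powi (int t0 + 1)
           ..< real_of_int (u0 + 1 - 1) / real N powi int t0 + real_of_int j / real N powi (int t0 + 1)}"
  proof -
    have a: "real_of_int u0 / P0 + real_of_int (j - 1) / (P0 * real N) = real_of_int u1 / (P0 * real N)"
      unfolding j_def using P0 N by (simp add: field_simps)
    have b: "real_of_int u0 / P0 + real_of_int j / (P0 * real N) = e"
      unfolding j_def e_def using P0 N by (simp add: field_simps)
    show ?thesis unfolding C_def ppow0 ppow1 using a b by simp
  qed
  have Cch: "C \<in> adic_children N J"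
    unfolding adic_children_def
    apply (rule CollectI, rule exI[of _ "int t0"], rule exI[of _ "u0+1"], rule exI[of _ j])
    apply (intro conjI)
    subgoal by (rule Jeq)
    subgoal using j1 unfolding j_def by simp
    subgoal using j2 unfolding j_def by (simp add: algebra_simps)
    subgoal by (rule Ceq)
    done
  have lt: "real_of_int u1 / (P0 * real N) < e" unfolding e_def using P0 N by (simp add: divide_strict_right_mono)
  have eSup: "e = Sup C" unfolding C_def using lt by simp
  have xe: "x < e" unfolding e_def using x1b(2) P0 N by (simp add: pos_less_divide_eq)
  have ey: "e < y"
  proof -
    obtain z where z: "z \<in> {x..<y}" "z \<notin> Kf t1" using sucT unfolding T_def t1_def by blast
    have "x * real N ^ t1 \<le> z * real N ^ t1" using z(1) Npos[of t1] by simp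
    hence "real_of_int u1 \<le> z * real N ^ t1" using x1b(1) unfolding P1 by (simp add: mult.assoc)
    hence "\<not> z * real N ^ t1 < real_of_int u1 + 1" using z(2) unfolding memK u1_def by auto
    hence "e \<le> z" unfolding e_def P1 using P0 N by (simp add: pos_divide_le_eq)
    thus ?thesis using z(1) by simp
  qed
  define w where "w = real_of_int (u0 + 1) / P0"
  have Jint: "J = {real_of_int u0 / P0 ..< w}"
    unfolding Jeq adic_interval_def ppow0 w_def by simp
  have yw: "y \<le> w"
  proof (rule ccontr)
    assume "\<not> y \<le> w"
    moreover have "x < w" unfolding w_def using x0b(2) P0 by (simp add: pos_less_divide_eq)
    ultimately have "w \<in> J" using IJ by auto
    thus False unfolding Jint by simp
  qed
  have xl: "real_of_int u0 / P0 \<le> x" using x0b(1) P0 by (simp add: pos_divide_le_eq)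
  have eint: "e \<in> interior J" unfolding Jint interior_atLeastLessThan using xl xe ey yw by auto
  have t1r: "t1 \<le> r" using Tb[OF t0T] unfolding t1_def by simp
  have "e * real N ^ r = real_of_int (u1 + 1) * real N ^ (r - t1)"
  proof -
    have "real N ^ r = real N ^ t1 * real N ^ (r - t1)" using t1r by (simp add: power_add[symmetric])
    moreover have "real_of_int (u1 + 1) / real N ^ t1 * (real N ^ t1 * real N ^ (r - t1))
        = real_of_int (u1 + 1) * real N ^ (r - t1)"
      using Npos[of t1] by (simp add: field_simps)
    ultimately show ?thesis unfolding e_def P1[symmetric] by simp
  qed
  hence "e * real N ^ r \<in> \<int>" by simp
  then obtain n1 where n1: "e * real N ^ r = of_int n1" by (auto elim: Ints_cases)
  obtain n2 where n2: "q * real N ^ r = of_int n2" using qint by (auto elim: Ints_cases)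
  have "\<bar>e * real N ^ r - q * real N ^ r\<bar> < 1"
  proof -
    have "\<bar>e - q\<bar> < y - x" using xe ey xq qy by auto
    hence "\<bar>e - q\<bar> * real N ^ r < (y - x) * real N ^ r" using Npos[of r] by simp
    thus ?thesis using small by (simp add: abs_mult left_diff_distrib[symmetric])
  qed
  hence "\<bar>real_of_int (n1 - n2)\<bar> < 1" using n1 n2 by simp
  hence "n1 = n2" by linarith
  hence "e * real N ^ r = q * real N ^ r" using n1 n2 by simp
  hence eq: "e = q" using N by simp
  have ice: "interior_child_endpoint N J q"
    unfolding interior_child_endpoint_def using Cch eSup eint eq by blast
  show ?thesis using smJ IJ minJ ice by simp
qed


lemma pow_le_2pow: "(v::nat) ^ n \<le> 2 ^ (v * n)"
proof -
  have "v ^ n \<le> (2 ^ v) ^ n" by (rule power_mono) (simp add: less_imp_le less_exp, simp)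
  thus ?thesis by (simp add: power_mult)
qed

lemma B1n:
  assumes "p \<ge> 2" "v \<ge> 2"
  shows "2 * v ^ (100 * l) \<le> p ^ (200 * v * l+1)"
proof -
  have "v ^ (100 * l) \<le> 2 ^ (v * (100 * l))" by (rule pow_le_2pow)
  also have "\<dots> \<le> 2 ^ (200 * v * l)" by (rule power_increasing) auto
  finally have "2 * v ^ (100 * l) \<le> 2 ^ (200 * v * l+1)" by simp
  also have "\<dots> \<le> p ^ (200 * v * l+1)" by (rule power_mono) (use assms in auto)
  finally show ?thesis .
qed

lemma B2n:
  assumes "p \<ge> 2" "v \<ge> 2" "l < l'"
  shows "2 * v * p ^ (200 * v * l+1) \<le> p ^ (200 * v * l'+1)"
proof -
  have e: "200 * v * l'+1 = (200 * v * l+1) + 200 * v * (l'-l)" using assms(3)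
    by (simp add: algebra_simps diff_mult_distrib2)
  have "2 * v < 2 * 2 ^ v" using less_exp[of v] by simp
  also have "\<dots> = 2 ^ (v+1)" by simp
  also have "\<dots> \<le> 2 ^ (200 * v * (l'-l))"
  proof (rule power_increasing)
    have "200 * v * 1 \<le> 200 * v * (l'-l)" using assms(3) by (intro mult_le_mono2) auto
    thus "v + 1 \<le> 200 * v * (l'-l)" using assms by linarith
  qed simp
  also have "\<dots> \<le> p ^ (200 * v * (l'-l))" by (rule power_mono) (use assms in auto)
  finally have "2 * v \<le> p ^ (200 * v * (l'-l))" by simp
  hence "2 * v * p ^ (200 * v * l+1) \<le> p ^ (200 * v * (l'-l)) * p ^ (200 * v * l+1)" by simp
  also have "\<dots> = p ^ (200 * v * l'+1)" unfolding e by (simp add: power_add)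
  finally show ?thesis .
qed

lemma E1n:
  assumes "p \<ge> 2"
  shows "2 * M ^ rho \<le> p ^ (M * rho+1)"
proof -
  have "M ^ rho \<le> 2 ^ (M * rho)" by (rule pow_le_2pow)
  hence "2 * M ^ rho \<le> 2 ^ (M * rho+1)" by simp
  also have "\<dots> \<le> p ^ (M * rho+1)" by (rule power_mono) (use assms in auto)
  finally show ?thesis .
qed

lemma E2n:
  assumes "v \<ge> 2" "M * r + 1 \<le> s"
  shows "M ^ r < v ^ s"
proof -
  have "M ^ r \<le> 2 ^ (M * r)" by (rule pow_le_2pow)
  also have "\<dots> < 2 ^ s" using assms(2) by (intro power_strict_increasing) auto
  also have "\<dots> \<le> v ^ s" by (rule power_mono) (use assms in auto)
  finally show ?thesis .
qed

lemma Y1: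
  fixes v p rho :: nat
  assumes "v \<ge> 2" "p \<ge> 2"
  defines "m \<equiv> (v-1)*p^rho div v + 1"
  shows "(real v - 1)/real v + 1/(real v * real p ^ rho) \<le> real m / real p ^ rho"
    and "real m / real p ^ rho \<le> (real v - 1)/real v + 1/real p ^ rho"
proof -
  define n where "n = (v-1)*p^rho"
  have mv: "m * v = n - n mod v + v" unfolding m_def n_def
    by (metis add_mult_distrib minus_mod_eq_div_mult mult.commute mult_1)
  have "n mod v < v" using assms by simp
  hence h1: "n + 1 \<le> m * v" "m * v \<le> n + v" using mv by auto
  have Ppos: "real p ^ rho > 0" using assms by simp
  have vpos: "real v > 0" using assms by simp
  have rn: "real n = (real v - 1) * real p ^ rho" unfolding n_def using assms by (simp add: of_nat_diff)
  have "real n + 1 \<le> real m * real v" using h1(1) by (metis of_nat_add of_nat_le_iff of_nat_mult of_nat_1)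
  hence A: "(real v - 1) * real p ^ rho + 1 \<le> real m * real v" using rn by simp
  have "real m * real v \<le> real n + real v" using h1(2) by (metis of_nat_add of_nat_le_iff of_nat_mult)
  hence B: "real m * real v \<le> (real v - 1) * real p ^ rho + real v" using rn by simp
  have e1: "(real v - 1)/real v + 1/(real v * real p ^ rho) = ((real v - 1) * real p ^ rho + 1) / (real v * real p ^ rho)"
    using Ppos vpos by (simp add: field_simps)
  have e2: "real m / real p ^ rho = (real m * real v) / (real v * real p ^ rho)"
    using vpos by simp
  have e3: "(real v - 1)/real v + 1/real p ^ rho = ((real v - 1) * real p ^ rho + real v) / (real v * real p ^ rho)"
    using Ppos vpos by (simp add: field_simps)
  show "(real v - 1)/real v + 1/(real v * real p ^ rho) \<le> real m / real p ^ rho"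
    unfolding e1 e2 using A Ppos vpos by (intro divide_right_mono) auto
  show "real m / real p ^ rho \<le> (real v - 1)/real v + 1/real p ^ rho"
    unfolding e3 e2 using B Ppos vpos by (intro divide_right_mono) auto
qed


definition rho_of :: "nat \<Rightarrow> nat \<Rightarrow> nat" where "rho_of v l = 200 * v * l + 1"
definition m_of :: "nat \<Rightarrow> nat \<Rightarrow> nat \<Rightarrow> nat" where "m_of p v l = (v-1) * p ^ rho_of v l div v + 1"
definition yy :: "nat \<Rightarrow> nat \<Rightarrow> nat \<Rightarrow> real" where "yy p v l = real (m_of p v l) / real p ^ rho_of v l"
definition WW :: "nat \<Rightarrow> nat \<Rightarrow> nat \<Rightarrow> real set" where
  "WW p v l = {yy p v l ..< yy p v l + 1 / real p ^ rho_of v l}"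

lemma W_bounds:
  assumes p: "p \<ge> 2" and v: "v \<ge> 2" and l: "l \<ge> 1"
  shows "(real v - 1)/real v + 1/(real v * real p ^ rho_of v l) \<le> yy p v l"
    and "yy p v l \<le> (real v - 1)/real v + 1/real p ^ rho_of v l"
    and "2 * real v ^ (100 * l) \<le> real p ^ rho_of v l"
    and "yy p v l + 1 / real p ^ rho_of v l \<le> 1"
    and "0 \<le> yy p v l"
proof -
  show y1: "(real v - 1)/real v + 1/(real v * real p ^ rho_of v l) \<le> yy p v l"
    unfolding yy_def m_of_def by (rule Y1(1)) (use p v in auto)
  show y2: "yy p v l \<le> (real v - 1)/real v + 1/real p ^ rho_of v l"
    unfolding yy_def m_of_def by (rule Y1(2)) (use p v in auto)
  have "2 * v ^ (100 * l) \<le> p ^ rho_of v l" unfolding rho_of_def by (rule B1n[OF p v])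
  hence "real (2 * v ^ (100 * l)) \<le> real (p ^ rho_of v l)" by (simp only: of_nat_le_iff)
  thus pb: "2 * real v ^ (100 * l) \<le> real p ^ rho_of v l" by simp
  have A: "real v ^ 1 \<le> real v ^ (100 * l)" using v l by (intro power_increasing) auto
  have "real v \<le> real v ^ (100 * l)" using A by (simp only: power_one_right)
  hence "2 * real v \<le> real p ^ rho_of v l" using pb by linarith
  hence "1 / real p ^ rho_of v l \<le> 1 / (2 * real v)" using v p by (intro divide_left_mono) auto
  hence D: "2 * (1 / real p ^ rho_of v l) \<le> 1 / real v" by simp
  have E: "(real v - 1)/real v + 1/real v = 1" using v by (simp add: field_simps)
  show "yy p v l + 1 / real p ^ rho_of v l \<le> 1" using y2 D E by linarith
  show "0 \<le> yy p v l" unfolding yy_def by simp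
qed

lemma W_sub:
  assumes "p \<ge> 2" "v \<ge> 2" "l \<ge> 1"
  shows "WW p v l \<subseteq> {0..<1}"
  using W_bounds(4,5)[OF assms] unfolding WW_def by auto

lemma W_disj_lt:
  assumes p: "p \<ge> 2" and v: "v \<ge> 2" and l: "l \<ge> 1" and ll: "l < l'"
  shows "WW p v l \<inter> WW p v l' = {}"
proof -
  have "2 * v * p ^ rho_of v l \<le> p ^ rho_of v l'" unfolding rho_of_def by (rule B2n[OF p v ll])
  hence "real (2 * v * p ^ rho_of v l) \<le> real (p ^ rho_of v l')" by (simp only: of_nat_le_iff)
  hence h: "2 * real v * real p ^ rho_of v l \<le> real p ^ rho_of v l'" by simp
  have Pp: "real p ^ rho_of v l > 0" using p by simp
  have "2 / real p ^ rho_of v l' \<le> 2 / (2 * real v * real p ^ rho_of v l)"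
    using h Pp v p by (intro divide_left_mono) auto
  hence "2 / real p ^ rho_of v l' \<le> 1 / (real v * real p ^ rho_of v l)" by simp
  moreover have "yy p v l' \<le> (real v - 1)/real v + 1/real p ^ rho_of v l'" by (rule W_bounds(2)) (use p v l ll in auto)
  moreover have "(real v - 1)/real v + 1/(real v * real p ^ rho_of v l) \<le> yy p v l" by (rule W_bounds(1)[OF p v l])
  ultimately have "yy p v l' + 1 / real p ^ rho_of v l' \<le> yy p v l" by simp
  thus ?thesis unfolding WW_def by auto
qed

lemma W_disj:
  assumes "p \<ge> 2" "v \<ge> 2" "l \<ge> 1" "l' \<ge> 1" "l \<noteq> l'"
  shows "WW p v l \<inter> WW p v l' = {}"
proof (cases "l < l'")
  case True thus ?thesis using W_disj_lt assms by blast
next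
  case False hence "l' < l" using assms by simp
  thus ?thesis using W_disj_lt[of p v l' l] assms by blast
qed


lemma per_l:
  fixes p v k l :: nat and c :: "nat \<Rightarrow> nat"
  assumes pr: "prime p" and cpos: "\<forall>i\<in>{1..k}. c i > 0" and v: "v \<ge> 2"
    and cop: "coprime v p" and l: "l \<ge> 1"
  shows "\<exists>s kk. adic_interval v s kk \<subseteq> WW p v l \<and>
    (\<forall>i\<in>{1..k}. smallest_adic (p * c i) (adic_interval v s kk) \<subseteq> WW p v l \<and>
      (\<exists>\<zeta>. interior_child_endpoint (p * c i) (smallest_adic (p * c i) (adic_interval v s kk)) \<zeta> \<and>
        0 < \<zeta> - Zpt v (adic_interval v s kk) \<and>
        \<zeta> - Zpt v (adic_interval v s kk) \<le> real v powi (- (100 * int l)) * ilen (adic_interval v s kk)))"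
proof -
  have p2: "p \<ge> 2" using pr prime_ge_2_nat by blast
  define rh where "rh = rho_of v l"
  define m where "m = m_of p v l"
  define y where "y = yy p v l"
  define P0 where "P0 = real p ^ rh"
  define g where "g = (real v - 1) / real v"
  have y_def': "y = real m / P0" unfolding y_def yy_def m_def P0_def rh_def by simp
  have wb1: "g + 1/(real v * P0) \<le> y" and wb2: "y \<le> g + 1/P0" and wb3: "2 * real v ^ (100 * l) \<le> P0"
    and wb4: "y + 1/P0 \<le> 1" and wb5: "0 \<le> y"
    using W_bounds[OF p2 v l] unfolding g_def y_def P0_def rh_def by auto
  have WWeq: "WW p v l = {y ..< y + 1/P0}" unfolding WW_def y_def P0_def rh_def by simp
  have rh1: "rh \<ge> 1" unfolding rh_def rho_of_def by simp
  define C where "C = (\<Sum>i\<in>{1..k}. c i) + 1"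
  define M where "M = p * C"
  have cC: "c i \<le> C" if "i \<in> {1..k}" for i
  proof -
    have "c i \<le> (\<Sum>i\<in>{1..k}. c i)" using that by (intro member_le_sum) auto
    thus ?thesis unfolding C_def by simp
  qed
  have C1: "C \<ge> 1" unfolding C_def by simp
  have pM: "p \<le> M" unfolding M_def using C1 by simp
  have M2: "M \<ge> 2" using pM p2 by simp
  define r where "r = M * rh + 1"
  have rr: "rh < r" unfolding r_def using M2 by (simp add: less_Suc_eq_le)
  define P where "P = real p ^ r"
  define a where "a = m * p ^ (r - rh) + 1"
  define q where "q = real a / P"
  have Ppos: "P > 0" and P0pos: "P0 > 0" unfolding P_def P0_def using p2 by auto
  have PP0: "P = P0 * real p ^ (r - rh)" unfolding P_def P0_def using rr
    by (simp add: power_add[symmetric])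
  have qy: "q = y + 1/P"
    unfolding q_def a_def y_def' PP0 using P0pos p2 by (simp add: field_simps)
  have qP: "q * P = real a" unfolding q_def using Ppos by simp
  define s where "s = totient (p ^ r) * (M * r + 1)"
  have t1: "totient (p ^ r) \<ge> 1" using p2 by (simp add: Suc_le_eq)
  have sM: "M * r + 1 \<le> s" unfolding s_def using mult_le_mono1[OF t1, of "M * r + 1"] by simp
  have "[v ^ totient (p ^ r) = 1] (mod p ^ r)" by (rule euler_theorem) (use cop in simp)
  hence "[(v ^ totient (p ^ r)) ^ (M * r + 1) = 1 ^ (M * r + 1)] (mod p ^ r)" by (rule cong_pow)
  hence cg: "[v ^ s = 1] (mod p ^ r)" unfolding s_def by (simp only: power_mult power_one)
  have dv: "p ^ r dvd v ^ s - 1" by (rule cong_to_1_nat[OF cg])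
  define KK where "KK = (v ^ s - 1) div p ^ r"
  have vs1: "v ^ s \<ge> 1" using v by simp
  have vsK: "v ^ s = KK * p ^ r + 1" unfolding KK_def using dv vs1 by simp
  define V where "V = real v ^ s"
  have VK: "V = real KK * P + 1" unfolding V_def P_def
    using arg_cong[OF vsK, of real] by simp
  have E1: "2 * real M ^ rh \<le> P"
  proof -
    have "2 * M ^ rh \<le> p ^ (M * rh + 1)" by (rule E1n[OF p2])
    hence "real (2 * M ^ rh) \<le> real (p ^ (M * rh + 1))" by (simp only: of_nat_le_iff)
    thus ?thesis unfolding P_def r_def by simp
  qed
  have E2: "real M ^ r < V"
  proof -
    have "M ^ r < v ^ s" by (rule E2n[OF v sM])
    hence "real (M ^ r) < real (v ^ s)" by (simp only: of_nat_less_iff)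
    thus ?thesis unfolding V_def by simp
  qed
  have P0M: "P0 \<le> real M ^ rh" unfolding P0_def using pM by (intro power_mono) auto
  have PM: "P \<le> real M ^ r" unfolding P_def using pM by (intro power_mono) auto
  have PV: "P < V" using PM E2 by simp
  have Vpos: "V > 0" using PV Ppos by simp
  have P0P: "2 * P0 \<le> P" using E1 P0M by simp
  have iP: "1/P \<le> 1/(2*P0)" using P0P P0pos by (intro divide_left_mono) auto
  have h2: "1/(2*P0) = (1/P0)/2" by simp
  have h3: "1/P0 > 0" using P0pos by simp
  have q1: "q < 1" using qy iP wb4 h2 h3 by linarith
  have "1/P > 0" using Ppos by simp
  hence q0: "0 < q" using qy wb5 by linarith
  define xI where "xI = q - q/V"
  define yI where "yI = q - q/V + 1/V"
  have powV: "real v powi int s = V" unfolding V_def by (simp add: power_int_of_nat)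
  have powV1: "real v powi (int s + 1) = V * real v"
    using power_int_add_1[of "real v" "int s"] powV v by simp
  define kk where "kk = int (a * KK + 1)"
  define I where "I = adic_interval v (int s) kk"
  have xIe: "real_of_int (kk - 1) / V = xI"
  proof -
    have "real_of_int (kk - 1) = real a * real KK" unfolding kk_def by simp
    also have "\<dots> = q * P * real KK" using qP by simp
    also have "\<dots> = q * (V - 1)" using VK by simp
    finally show ?thesis unfolding xI_def using Vpos by (simp add: field_simps)
  qed
  have yIe: "real_of_int kk / V = yI"
  proof -
    have "real_of_int kk / V = real_of_int (kk - 1) / V + 1 / V"
      by (simp add: diff_divide_distrib)
    thus ?thesis using xIe unfolding yI_def xI_def by simp
  qed
  have Ieq: "I = {xI ..< yI}" unfolding I_def adic_interval_def powV xIe yIe by simp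
  have Zeq: "Zpt v I = xI + (real v - 1) / (V * real v)"
    unfolding I_def using Zpt_adic[of v "int s" kk] v powV powV1 xIe by simp
  have ilenI: "ilen I = 1/V" unfolding I_def using ilen_adic[of v "int s" kk] v powV by simp
  have diff: "q - Zpt v I = (q - g)/V"
    unfolding Zeq xI_def g_def using Vpos v by (simp add: field_simps)
  have "1/(real v * P0) > 0" using v P0pos by simp
  hence qg0: "0 < q - g" using qy wb1 \<open>1/P > 0\<close> by linarith
  have qg1: "q - g \<le> 1 / real v ^ (100 * l)"
  proof -
    have vp: "real v ^ (100 * l) > 0" using v by simp
    have "1/P0 \<le> 1/(2 * real v ^ (100 * l))" using wb3 vp P0pos by (intro divide_left_mono) auto
    hence "2 * (1/P0) \<le> 1 / real v ^ (100 * l)" by simp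
    moreover have "1/P \<le> 1/P0" using P0P P0pos by (intro divide_left_mono) auto
    ultimately show ?thesis using qy wb2 by linarith
  qed
  have powm: "real v powi (- (100 * int l)) = 1 / real v ^ (100 * l)"
  proof -
    have "real v powi (100 * int l) = real v ^ (100 * l)"
      using power_int_of_nat[of "real v" "100 * l"] by simp
    thus ?thesis by (simp add: power_int_minus divide_inverse)
  qed
  have bound: "q - Zpt v I \<le> real v powi (- (100 * int l)) * ilen I"
  proof -
    have "(q - g) / V \<le> (1 / real v ^ (100 * l)) / V" by (rule divide_right_mono[OF qg1]) (use Vpos in simp)
    thus ?thesis unfolding diff powm ilenI by simp
  qed
  have pos: "0 < q - Zpt v I" unfolding diff using qg0 Vpos by simp
  have qV: "q / V \<le> 1/P"
  proof -
    have "q / V \<le> 1 / V" using q1 Vpos by (simp add: divide_right_mono)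
    also have "\<dots> \<le> 1 / P" using PV Ppos by (intro divide_left_mono) auto
    finally show ?thesis .
  qed
  have iV: "1/V \<le> 1/P" using PV Ppos by (intro divide_left_mono) auto
  have xIy: "y \<le> xI" unfolding xI_def using qy qV by simp
  have xIq: "xI < q" unfolding xI_def using q0 Vpos by simp
  have qyI: "q < yI" unfolding yI_def using q1 Vpos by (simp add: divide_strict_right_mono)
  have "q / V \<ge> 0" using q0 Vpos by simp
  hence yIb: "yI \<le> y + 2 * (1/P)" unfolding yI_def using qy iV by linarith
  have yIW: "yI \<le> y + 1/P0" using yIb iP by simp
  have IW: "I \<subseteq> WW p v l" unfolding Ieq WWeq using xIy yIW by auto
  have main: "smallest_adic (p * c i) I \<subseteq> WW p v l \<and>
      (\<exists>\<zeta>. interior_child_endpoint (p * c i) (smallest_adic (p * c i) I) \<zeta> \<and>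
        0 < \<zeta> - Zpt v I \<and> \<zeta> - Zpt v I \<le> real v powi (- (100 * int l)) * ilen I)"
    if i: "i \<in> {1..k}" for i
  proof -
    define N where "N = p * c i"
    have "c i > 0" using cpos i by blast
    hence ci: "c i \<ge> 1" by simp
    have N2: "N \<ge> 2" unfolding N_def using p2 ci by (metis mult_le_mono nat_mult_1_right)
    have NM: "N \<le> M" unfolding N_def M_def using cC[OF i] by simp
    have pN: "p \<le> N" unfolding N_def using ci by simp
    have NrM: "real N ^ r \<le> real M ^ r" using NM by (intro power_mono) auto
    have NhM: "real N ^ rh \<le> real M ^ rh" using NM by (intro power_mono) auto
    have P0N: "P0 \<le> real N ^ rh" unfolding P0_def using pN by (intro power_mono) auto
    have Nhpos: "real N ^ rh > 0" using N2 by simp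
    have iN: "2 * (1/P) \<le> 1 / real N ^ rh"
    proof -
      have "1/P \<le> 1/(2 * real N ^ rh)" using E1 NhM Nhpos Ppos by (intro divide_left_mono) auto
      thus ?thesis by simp
    qed
    have iN0: "1 / real N ^ rh \<le> 1 / P0" using P0N P0pos Nhpos by (intro divide_left_mono) auto
    have yI1: "yI \<le> 1" using yIb iN iN0 wb4 by linarith
    have qint: "q * real N ^ r \<in> \<int>"
    proof -
      have "q * real N ^ r = q * P * real (c i) ^ r" unfolding N_def P_def by (simp add: power_mult_distrib)
      also have "\<dots> = real a * real (c i) ^ r" using qP by simp
      finally show ?thesis by simp
    qed
    have small: "(yI - xI) * real N ^ r < 1"
    proof -
      have "(yI - xI) * real N ^ r = real N ^ r / V" unfolding yI_def xI_def by simp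
      also have "\<dots> < 1" using NrM E2 Vpos by simp
      finally show ?thesis .
    qed
    have kA: "{xI..<yI} \<subseteq> smallest_adic N {xI..<yI} \<and>
     (\<forall>J'. is_adic N J' \<and> {xI..<yI} \<subseteq> J' \<longrightarrow> smallest_adic N {xI..<yI} \<subseteq> J') \<and>
     interior_child_endpoint N (smallest_adic N {xI..<yI}) q"
      by (rule keyA[OF N2 _ xIq qyI yI1 qint small]) (use xIy wb5 in linarith)
    define R where "R = adic_interval N (int rh) (int (m * c i ^ rh) + 1)"
    have Req: "R = {y ..< y + 1 / real N ^ rh}"
    proof -
      have e1: "real N ^ rh = P0 * real (c i) ^ rh" unfolding N_def P0_def by (simp add: power_mult_distrib)
      have cpos': "real (c i) ^ rh > 0" using ci by simp
      have "real (m * c i ^ rh) / real N ^ rh = y" unfolding e1 y_def' using cpos' by simp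
      moreover have "real (m * c i ^ rh + 1) / real N ^ rh = y + 1 / real N ^ rh"
        using calculation by (simp add: add_divide_distrib)
      ultimately show ?thesis unfolding R_def adic_interval_def by (simp add: power_int_of_nat add.commute)
    qed
    have adR: "is_adic N R" unfolding R_def is_adic_def by blast
    have IR: "{xI..<yI} \<subseteq> R" unfolding Req using xIy yIb iN by auto
    have RW: "R \<subseteq> WW p v l" unfolding Req WWeq using iN0 by auto
    have "smallest_adic N {xI..<yI} \<subseteq> R" using kA adR IR by blast
    hence "smallest_adic N I \<subseteq> WW p v l" using RW Ieq by auto
    moreover have "interior_child_endpoint N (smallest_adic N I) q" using kA Ieq by simp
    ultimately show ?thesis unfolding N_def using pos bound by blast
  qed
  show ?thesis using IW main unfolding I_def by blast
qed

theorem theorem2p5: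
  fixes p v k :: nat and c :: "nat \<Rightarrow> nat"
  assumes "prime p"
    and "\<forall>i\<in>{1..k}. c i > 0"
    and "v \<ge> 2"
    and "coprime v p"
  shows "\<exists>(I :: nat \<Rightarrow> real set) (\<alpha> :: nat \<Rightarrow> nat).
     (\<forall>l\<ge>1. is_adic v (I l) \<and> I l \<subseteq> {0..<1} \<and> \<alpha> l > 0) \<and>
     (\<forall>i\<in>{1..k}.
        (\<forall>l\<ge>1. smallest_adic (p * c i) (I l) \<subseteq> {0..<1}) \<and>
        (\<forall>l\<ge>1. \<forall>m\<ge>1. l \<noteq> m \<longrightarrow>
            smallest_adic (p * c i) (I l) \<inter> smallest_adic (p * c i) (I m) = {})) \<and>
     (\<forall>l\<ge>1. \<forall>m\<ge>1. l \<noteq> m \<longrightarrow> I l \<inter> I m = {}) \<and>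
     (\<forall>a::nat. finite {l. l \<ge> 1 \<and> \<alpha> l = a}) \<and>
     (\<forall>l\<ge>1. \<forall>i\<in>{1..k}. \<exists>\<zeta>.
        interior_child_endpoint (p * c i) (smallest_adic (p * c i) (I l)) \<zeta> \<and>
        0 < \<zeta> - Zpt v (I l) \<and>
        \<zeta> - Zpt v (I l) \<le> real v powi (- (100 * int (\<alpha> l))) * ilen (I l))"
proof -
  have p2: "p \<ge> 2" using assms(1) prime_ge_2_nat by blast
  have "\<forall>l. \<exists>s kk. l \<ge> 1 \<longrightarrow> adic_interval v s kk \<subseteq> WW p v l \<and>
    (\<forall>i\<in>{1..k}. smallest_adic (p * c i) (adic_interval v s kk) \<subseteq> WW p v l \<and>
      (\<exists>\<zeta>. interior_child_endpoint (p * c i) (smallest_adic (p * c i) (adic_interval v s kk)) \<zeta> \<and>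
        0 < \<zeta> - Zpt v (adic_interval v s kk) \<and>
        \<zeta> - Zpt v (adic_interval v s kk) \<le> real v powi (- (100 * int l)) * ilen (adic_interval v s kk)))"
  proof
    fix l :: nat
    show "\<exists>s kk. l \<ge> 1 \<longrightarrow> adic_interval v s kk \<subseteq> WW p v l \<and>
    (\<forall>i\<in>{1..k}. smallest_adic (p * c i) (adic_interval v s kk) \<subseteq> WW p v l \<and>
      (\<exists>\<zeta>. interior_child_endpoint (p * c i) (smallest_adic (p * c i) (adic_interval v s kk)) \<zeta> \<and>
        0 < \<zeta> - Zpt v (adic_interval v s kk) \<and>
        \<zeta> - Zpt v (adic_interval v s kk) \<le> real v powi (- (100 * int l)) * ilen (adic_interval v s kk)))"
    proof (cases "l \<ge> 1")
      case True
      from per_l[OF assms True] obtain s kk where B: "adic_interval v s kk \<subseteq> WW p v l \<and>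
    (\<forall>i\<in>{1..k}. smallest_adic (p * c i) (adic_interval v s kk) \<subseteq> WW p v l \<and>
      (\<exists>\<zeta>. interior_child_endpoint (p * c i) (smallest_adic (p * c i) (adic_interval v s kk)) \<zeta> \<and>
        0 < \<zeta> - Zpt v (adic_interval v s kk) \<and>
        \<zeta> - Zpt v (adic_interval v s kk) \<le> real v powi (- (100 * int l)) * ilen (adic_interval v s kk)))" by blast
      show ?thesis by (rule exI[of _ s], rule exI[of _ kk], rule impI, rule B)
    next
      case False
      thus ?thesis by blast
    qed
  qed
  from choice[OF this] obtain S where "\<forall>l. \<exists>kk. l \<ge> 1 \<longrightarrow> adic_interval v (S l) kk \<subseteq> WW p v l \<and>
    (\<forall>i\<in>{1..k}. smallest_adic (p * c i) (adic_interval v (S l) kk) \<subseteq> WW p v l \<and>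
      (\<exists>\<zeta>. interior_child_endpoint (p * c i) (smallest_adic (p * c i) (adic_interval v (S l) kk)) \<zeta> \<and>
        0 < \<zeta> - Zpt v (adic_interval v (S l) kk) \<and>
        \<zeta> - Zpt v (adic_interval v (S l) kk) \<le> real v powi (- (100 * int l)) * ilen (adic_interval v (S l) kk)))"
    ..
  from choice[OF this] obtain KK where H: "\<forall>l. l \<ge> 1 \<longrightarrow> adic_interval v (S l) (KK l) \<subseteq> WW p v l \<and>
    (\<forall>i\<in>{1..k}. smallest_adic (p * c i) (adic_interval v (S l) (KK l)) \<subseteq> WW p v l \<and>
      (\<exists>\<zeta>. interior_child_endpoint (p * c i) (smallest_adic (p * c i) (adic_interval v (S l) (KK l))) \<zeta> \<and>
        0 < \<zeta> - Zpt v (adic_interval v (S l) (KK l)) \<and>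
        \<zeta> - Zpt v (adic_interval v (S l) (KK l)) \<le> real v powi (- (100 * int l)) * ilen (adic_interval v (S l) (KK l))))"
    ..
  define I where "I l = adic_interval v (S l) (KK l)" for l
  have H1: "I l \<subseteq> WW p v l" if "l \<ge> 1" for l
    using conjunct1[OF H[rule_format, OF that]] unfolding I_def .
  have H2: "smallest_adic (p * c i) (I l) \<subseteq> WW p v l" if "l \<ge> 1" "i \<in> {1..k}" for l i
    using conjunct1[OF bspec[OF conjunct2[OF H[rule_format, OF that(1)]] that(2)]] unfolding I_def .
  have H3: "\<exists>\<zeta>. interior_child_endpoint (p * c i) (smallest_adic (p * c i) (I l)) \<zeta> \<and>
        0 < \<zeta> - Zpt v (I l) \<and>
        \<zeta> - Zpt v (I l) \<le> real v powi (- (100 * int l)) * ilen (I l)"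
    if "l \<ge> 1" "i \<in> {1..k}" for l i
    using conjunct2[OF bspec[OF conjunct2[OF H[rule_format, OF that(1)]] that(2)]] unfolding I_def .
  have Wd: "WW p v l \<inter> WW p v m = {}" if "l \<ge> 1" "m \<ge> 1" "l \<noteq> m" for l m
    by (rule W_disj) (use p2 assms(3) that in auto)
  have Ws: "WW p v l \<subseteq> {0..<1}" if "l \<ge> 1" for l
    by (rule W_sub) (use p2 assms(3) that in auto)
  show ?thesis
  proof (intro exI[of _ I] exI[of _ "\<lambda>l. l"] conjI allI impI ballI)
    fix l :: nat assume l: "l \<ge> 1"
    show "is_adic v (I l)" unfolding I_def is_adic_def by blast
    show "I l \<subseteq> {0..<1}" using H1[OF l] Ws[OF l] by blast
    show "0 < l" using l by simp
  next
    fix i l :: nat assume i: "i \<in> {1..k}" and l: "l \<ge> 1"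
    show "smallest_adic (p * c i) (I l) \<subseteq> {0..<1}" using H2[OF l i] Ws[OF l] by blast
  next
    fix i l m :: nat assume i: "i \<in> {1..k}" and l: "l \<ge> 1" and m: "m \<ge> 1" and lm: "l \<noteq> m"
    show "smallest_adic (p * c i) (I l) \<inter> smallest_adic (p * c i) (I m) = {}"
      using H2[OF l i] H2[OF m i] Wd[OF l m lm] by blast
  next
    fix l m :: nat assume l: "l \<ge> 1" and m: "m \<ge> 1" and lm: "l \<noteq> m"
    show "I l \<inter> I m = {}" using H1[OF l] H1[OF m] Wd[OF l m lm] by blast
  next
    fix a :: nat
    show "finite {l. l \<ge> 1 \<and> l = a}" by (rule finite_subset[of _ "{a}"]) auto
  next
    fix l i :: nat assume l: "l \<ge> 1" and i: "i \<in> {1..k}"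
    show "\<exists>\<zeta>. interior_child_endpoint (p * c i) (smallest_adic (p * c i) (I l)) \<zeta> \<and>
        0 < \<zeta> - Zpt v (I l) \<and>
        \<zeta> - Zpt v (I l) \<le> real v powi (- (100 * int l)) * ilen (I l)"
      using H3[OF l i] .
  qed
qed

end
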